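(* Let $U$ be a finite nonempty set, let $(T,I,N)$ be a residual triplet, and let $\widetilde{R}$ be a $T$-preorder relation on $U$. Let $u,v\in U$ and $\lambda_1,\lambda_2\in[0,1]$. Then the fuzzy granules $\widetilde{R}^+_{\lambda_1}(u)$ and $\widetilde{R}^-_{\lambda_2}(v)$ are $T$-disjoint if and only if $$T(\lambda_1,\lambda_2)\le N(\widetilde{R}(v,u)).$$
   Context: A residual triplet $(T,I,N)$ consists of a left-continuous $t$-norm $T$, its residual implicator $I(x,y)=\sup\{\beta\in[0,1]: T(x,\beta)\le y\}$, and the induced negator $N(x)=I(x,0)$. A fuzzy relation $\widetilde{R}:U\times U\to[0,1]$ is a $T$-preorder if it is reflexive ($\widetilde{R}(u,u)=1$) and $T$-transitive ($T(\widetilde{R}(u,v),\widetilde{R}(v,w))\le \widetilde{R}(u,w)$ for all $u,v,w$). For $u\in U$ and $\lambda\in[0,1]$, the granule $\widetilde{R}^+_\lambda(u)$ is the fuzzy set on $U$ with membership $w\mapsto T(\widetilde{R}(w,u),\lambda)$, and $\widetilde{R}^-_\lambda(u)$ is the fuzzy set with membership $w\mapsto T(\widetilde{R}(u,w),\lambda)$. Two fuzzy sets $A,B$ on $U$ are $T$-disjoint if $T(A(w),B(w))=0$ for every $w\in U$. *)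

theory Defs
  imports "HOL-Analysis.Analysis"
begin

definition t_norm :: "(real \<Rightarrow> real \<Rightarrow> real) \<Rightarrow> bool" where
  "t_norm T \<longleftrightarrow>
     (\<forall>x\<in>{0..1}. \<forall>y\<in>{0..1}. T x y \<in> {0..1}) \<and>
     (\<forall>x\<in>{0..1}. \<forall>y\<in>{0..1}. T x y = T y x) \<and>
     (\<forall>x\<in>{0..1}. \<forall>y\<in>{0..1}. \<forall>z\<in>{0..1}. T x (T y z) = T (T x y) z) \<and>
     (\<forall>x\<in>{0..1}. \<forall>y\<in>{0..1}. \<forall>z\<in>{0..1}. y \<le> z \<longrightarrow> T x y \<le> T x z) \<and>
     (\<forall>x\<in>{0..1}. T x 1 = x)"

text \<open>Left-continuity (in the first argument; by commutativity also in the second).\<close>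
definition left_continuous_t_norm :: "(real \<Rightarrow> real \<Rightarrow> real) \<Rightarrow> bool" where
  "left_continuous_t_norm T \<longleftrightarrow> t_norm T \<and>
     (\<forall>x\<in>{0<..1}. \<forall>y\<in>{0..1}. ((\<lambda>z. T z y) \<longlongrightarrow> T x y) (at_left x))"

definition res_impl :: "(real \<Rightarrow> real \<Rightarrow> real) \<Rightarrow> real \<Rightarrow> real \<Rightarrow> real" where
  "res_impl T x y = Sup {\<beta> \<in> {0..1}. T x \<beta> \<le> y}"

definition res_neg :: "(real \<Rightarrow> real \<Rightarrow> real) \<Rightarrow> real \<Rightarrow> real" where
  "res_neg T x = res_impl T x 0"

definition fuzzy_rel_on :: "'a set \<Rightarrow> ('a \<Rightarrow> 'a \<Rightarrow> real) \<Rightarrow> bool" where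
  "fuzzy_rel_on U R \<longleftrightarrow> (\<forall>u\<in>U. \<forall>v\<in>U. R u v \<in> {0..1})"

definition T_preorder :: "(real \<Rightarrow> real \<Rightarrow> real) \<Rightarrow> 'a set \<Rightarrow> ('a \<Rightarrow> 'a \<Rightarrow> real) \<Rightarrow> bool" where
  "T_preorder T U R \<longleftrightarrow> fuzzy_rel_on U R \<and>
     (\<forall>u\<in>U. R u u = 1) \<and>
     (\<forall>u\<in>U. \<forall>v\<in>U. \<forall>w\<in>U. T (R u v) (R v w) \<le> R u w)"

definition granule_plus :: "(real \<Rightarrow> real \<Rightarrow> real) \<Rightarrow> ('a \<Rightarrow> 'a \<Rightarrow> real) \<Rightarrow> real \<Rightarrow> 'a \<Rightarrow> 'a \<Rightarrow> real" where
  "granule_plus T R lam u = (\<lambda>w. T (R w u) lam)"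

definition granule_minus :: "(real \<Rightarrow> real \<Rightarrow> real) \<Rightarrow> ('a \<Rightarrow> 'a \<Rightarrow> real) \<Rightarrow> real \<Rightarrow> 'a \<Rightarrow> 'a \<Rightarrow> real" where
  "granule_minus T R lam u = (\<lambda>w. T (R u w) lam)"

definition T_disjoint :: "(real \<Rightarrow> real \<Rightarrow> real) \<Rightarrow> 'a set \<Rightarrow> ('a \<Rightarrow> real) \<Rightarrow> ('a \<Rightarrow> real) \<Rightarrow> bool" where
  "T_disjoint T U A B \<longleftrightarrow> (\<forall>w\<in>U. T (A w) (B w) = 0)"

end

theory Submission
  imports Defs
begin

lemma resid0:
  assumes lc: "left_continuous_t_norm T" and c: "c \<in> {0..1}" and y: "y \<in> {0..1}"
  shows "T c y \<le> 0 \<longleftrightarrow> y \<le> res_neg T c"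
proof -
  have tn: "t_norm T" using lc unfolding left_continuous_t_norm_def by auto
  note d = tn[unfolded t_norm_def]
  have comm: "\<And>x y. x \<in> {0..1} \<Longrightarrow> y \<in> {0..1} \<Longrightarrow> T x y = T y x" using d by blast
  have cl: "\<And>x y. x \<in> {0..1} \<Longrightarrow> y \<in> {0..1} \<Longrightarrow> T x y \<in> {0..1}" using d by blast
  have mono: "\<And>x y z. x \<in> {0..1} \<Longrightarrow> y \<in> {0..1} \<Longrightarrow> z \<in> {0..1} \<Longrightarrow> y \<le> z \<Longrightarrow> T x y \<le> T x z"
    using d by blast
  have one: "\<And>x. x \<in> {0..1} \<Longrightarrow> T x 1 = x" using d by blast
  define S where "S = {\<beta> \<in> {0..1::real}. T c \<beta> \<le> 0}"
  have bdd: "bdd_above S" unfolding S_def by (rule bdd_aboveI[of _ 1]) auto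
  have T0: "T c 0 = 0"
  proof -
    have "T 0 c \<le> T 0 1" using mono[of 0 c 1] c by simp
    moreover have "T 0 1 = 0" using one[of 0] by simp
    moreover have "T 0 c \<ge> 0" using cl[of 0 c] c by simp
    moreover have "T c 0 = T 0 c" using comm[of c 0] c by simp
    ultimately show ?thesis by linarith
  qed
  have ne: "0 \<in> S" unfolding S_def using T0 by auto
  have Sle1: "Sup S \<le> 1" by (rule cSup_least) (use ne in blast, auto simp: S_def)
  have Sge0: "Sup S \<ge> 0" using cSup_upper[OF ne bdd] .
  have rn: "res_neg T c = Sup S" unfolding res_neg_def res_impl_def S_def by simp
  show ?thesis
  proof
    assume "T c y \<le> 0"
    then have "y \<in> S" using y unfolding S_def by auto
    then show "y \<le> res_neg T c" using rn cSup_upper[OF _ bdd] by auto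
  next
    assume yle: "y \<le> res_neg T c"
    have below: "T c z \<le> 0" if zz: "z \<in> {0..1}" "z < Sup S" for z
    proof -
      obtain b where b: "b \<in> S" "z < b" using less_cSupE[OF zz(2)] ne by blast
      have "T c z \<le> T c b" using mono[of c z b] c zz(1) b unfolding S_def by auto
      then show ?thesis using b unfolding S_def by auto
    qed
    show "T c y \<le> 0"
    proof (cases "y < Sup S")
      case True then show ?thesis using below y by auto
    next
      case False
      then have yS: "y = Sup S" using yle rn by auto
      show ?thesis
      proof (cases "Sup S = 0")
        case True then show ?thesis using yS T0 by simp
      next
        case False
        then have pos: "0 < Sup S" using Sge0 by auto
        have lim: "((\<lambda>z. T z c) \<longlongrightarrow> T (Sup S) c) (at_left (Sup S))"
          using lc pos Sle1 c unfolding left_continuous_t_norm_def by auto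
        have ev: "eventually (\<lambda>z. T z c \<le> 0) (at_left (Sup S))"
        proof -
          have "eventually (\<lambda>z. z \<in> {0<..<Sup S}) (at_left (Sup S))"
            using eventually_at_left_real[OF pos] .
          then show ?thesis
          proof (rule eventually_mono)
            fix z assume z: "z \<in> {0<..<Sup S}"
            then have "T c z \<le> 0" using below Sle1 by auto
            moreover have "T z c = T c z" using comm[of z c] c z Sle1 by auto
            ultimately show "T z c \<le> 0" by simp
          qed
        qed
        have "T (Sup S) c \<le> 0"
          using tendsto_upperbound[OF lim ev] trivial_limit_at_left_real by auto
        moreover have "T c (Sup S) = T (Sup S) c" using comm[of c "Sup S"] c Sge0 Sle1 by auto
        ultimately show ?thesis using yS by simp
      qed
    qed
  qed
qed

theorem proposition3:
  fixes U :: "'a set" and T :: "real \<Rightarrow> real \<Rightarrow> real" and R :: "'a \<Rightarrow> 'a \<Rightarrow> real"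
    and u v :: 'a and l1 l2 :: real
  assumes "finite U" and "U \<noteq> {}"
    and "left_continuous_t_norm T"
    and "T_preorder T U R"
    and "u \<in> U" and "v \<in> U"
    and "l1 \<in> {0..1}" and "l2 \<in> {0..1}"
  shows "T_disjoint T U (granule_plus T R l1 u) (granule_minus T R l2 v)
         \<longleftrightarrow> T l1 l2 \<le> res_neg T (R v u)"
proof -
  have tn: "t_norm T" using assms(3) unfolding left_continuous_t_norm_def by auto
  note d = tn[unfolded t_norm_def]
  have R01: "\<And>a b. a \<in> U \<Longrightarrow> b \<in> U \<Longrightarrow> R a b \<in> {0..1}"
    using assms(4) unfolding T_preorder_def fuzzy_rel_on_def by auto
  have Rrefl: "\<And>a. a \<in> U \<Longrightarrow> R a a = 1" using assms(4) unfolding T_preorder_def by auto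
  have Rtr: "\<And>a b c. a \<in> U \<Longrightarrow> b \<in> U \<Longrightarrow> c \<in> U \<Longrightarrow> T (R a b) (R b c) \<le> R a c"
    using assms(4) unfolding T_preorder_def by auto
  have comm: "\<And>x y. x \<in> {0..1} \<Longrightarrow> y \<in> {0..1} \<Longrightarrow> T x y = T y x" using d by blast
  have assoc: "\<And>x y z. x \<in> {0..1} \<Longrightarrow> y \<in> {0..1} \<Longrightarrow> z \<in> {0..1} \<Longrightarrow> T x (T y z) = T (T x y) z"
    using d by blast
  have cl: "\<And>x y. x \<in> {0..1} \<Longrightarrow> y \<in> {0..1} \<Longrightarrow> T x y \<in> {0..1}" using d by blast
  have mono: "\<And>x y z. x \<in> {0..1} \<Longrightarrow> y \<in> {0..1} \<Longrightarrow> z \<in> {0..1} \<Longrightarrow> y \<le> z \<Longrightarrow> T x y \<le> T x z"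
    using d by blast
  have one: "\<And>x. x \<in> {0..1} \<Longrightarrow> T x 1 = x" using d by blast
  let ?L = "T l1 l2"
  have L01: "?L \<in> {0..1}" using cl assms(7,8) by auto
  have key: "\<And>a b. a \<in> {0..1} \<Longrightarrow> b \<in> {0..1} \<Longrightarrow>
      T (T a l1) (T b l2) = T (T b a) ?L"
  proof -
    fix a b :: real assume a: "a \<in> {0..1}" and b: "b \<in> {0..1}"
    note l = assms(7,8)
    have "T (T a l1) (T b l2) = T (T (T a l1) b) l2" using assoc cl a b l by auto
    also have "T (T a l1) b = T b (T a l1)" using comm cl a b l by auto
    also have "T b (T a l1) = T (T b a) l1" using assoc a b l by auto
    also have "T (T (T b a) l1) l2 = T (T b a) ?L" using assoc cl a b l by auto
    finally show "T (T a l1) (T b l2) = T (T b a) ?L" .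
  qed
  have "T_disjoint T U (granule_plus T R l1 u) (granule_minus T R l2 v) \<longleftrightarrow> T (R v u) ?L \<le> 0"
  proof
    assume H: "T_disjoint T U (granule_plus T R l1 u) (granule_minus T R l2 v)"
    have "T (T (R u u) l1) (T (R v u) l2) = 0"
      using H assms(5) unfolding T_disjoint_def granule_plus_def granule_minus_def by auto
    moreover have "T (T (R u u) l1) (T (R v u) l2) = T (T (R v u) 1) ?L"
      using key[of "R u u" "R v u"] R01 assms(5,6) Rrefl by auto
    moreover have "T (R v u) 1 = R v u" using one R01 assms(5,6) by auto
    ultimately show "T (R v u) ?L \<le> 0" by simp
  next
    assume H: "T (R v u) ?L \<le> 0"
    show "T_disjoint T U (granule_plus T R l1 u) (granule_minus T R l2 v)"
      unfolding T_disjoint_def granule_plus_def granule_minus_def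
    proof
      fix w assume w: "w \<in> U"
      have e: "T (T (R w u) l1) (T (R v w) l2) = T (T (R v w) (R w u)) ?L"
        using key R01 w assms(5,6) by auto
      have "T (T (R v w) (R w u)) ?L = T ?L (T (R v w) (R w u))"
        using comm cl R01 w assms(5,6) L01 by auto
      also have "\<dots> \<le> T ?L (R v u)"
        using mono[OF L01 _ _ Rtr[OF assms(6) w assms(5)]] cl R01 w assms(5,6) by auto
      also have "\<dots> = T (R v u) ?L" using comm L01 R01 assms(5,6) by auto
      finally have "T (T (R v w) (R w u)) ?L \<le> 0" using H by simp
      moreover have "T (T (R v w) (R w u)) ?L \<ge> 0" using cl R01 w assms(5,6) L01 by auto
      ultimately show "T (T (R w u) l1) (T (R v w) l2) = 0" using e by simp
    qed
  qed
  also have "\<dots> \<longleftrightarrow> ?L \<le> res_neg T (R v u)"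
    using resid0[OF assms(3) R01[OF assms(6,5)] L01] .
  finally show ?thesis .
qed

end
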